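(* Let $n\ge3$, $1\le i\le n-1$, and define integers $a_1,\dots,a_{i(n-i)}\in\{1,\dots,n-1\}$ by the word $$s_{a_1}s_{a_2}\cdots s_{a_{i(n-i)}}:=(s_is_{i-1}\cdots s_1)(s_{i+1}s_i\cdots s_2)\cdots(s_{n-1}s_{n-2}\cdots s_{n-i})$$ (a product of $n-i$ blocks of $i$ consecutive descending simple reflections; it is a reduced expression of $\bar\omega^{-i}$). For $w\in W_0$ consider the condition $$(\ast)\qquad w<ws_{a_1}<ws_{a_1}s_{a_2}<\cdots<ws_{a_1}s_{a_2}\cdots s_{a_{i(n-i)}}$$ in the Bruhat order. Then: (a) $w$ satisfies $(\ast)$ if and only if $w\in W_{(i),0}$. (b) $w$ violates $(\ast)$ at exactly one place (i.e. there is exactly one $j$ with $ws_{a_1}\cdots s_{a_{j-1}}\not< ws_{a_1}\cdots s_{a_j}$) if and only if $w\in s_iW_{(i),0}$. In this case, for the unique $1\le j\le i(n-i)$ with $ws_{a_1}\cdots s_{a_{j-1}}>ws_{a_1}\cdots s_{a_{j-1}}s_{a_j}$, one has $ws_{a_1}\cdots s_{a_{j-1}}(\alpha_{a_j})=-\alpha_i$.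
   Context: $W_0=\mathfrak{S}_n$ is the Weyl group of $\mathrm{GL}_n$, with simple reflections $s_j=(j,j+1)$, Bruhat order $\le$, and acting on the roots $\alpha_{j,k}$ ($j\ne k$; $\alpha_{j,k}(\mathrm{diag}(t_1,\dots,t_n))=t_jt_k^{-1}$) by $w(\alpha_{j,k})=\alpha_{w(j),w(k)}$; simple roots $\alpha_j=\alpha_{j,j+1}$, and $-\alpha_{j,k}=\alpha_{k,j}$. $\bar\omega$ is the $n$-cycle with $\bar\omega(1)=n$, $\bar\omega(k)=k-1$ for $k\ge2$. $W_{(i),0}$ is the subgroup generated by $\{s_j:j\ne i\}$. *)

theory Defs
  imports "HOL-Combinatorics.Combinatorics"
begin

text \<open>Elements of W_0 = S_n are permutations of {1..n} (functions nat => nat with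
  w permutes {1..n}); product w s is composition w o s (apply s first).\<close>

definition sref :: "nat \<Rightarrow> nat \<Rightarrow> nat" where
  "sref j = Transposition.transpose j (Suc j)"

text \<open>Coxeter length = number of inversions.\<close>
definition perm_len :: "nat \<Rightarrow> (nat \<Rightarrow> nat) \<Rightarrow> nat" where
  "perm_len n w = card {(j, k). 1 \<le> j \<and> j < k \<and> k \<le> n \<and> w k < w j}"

definition bruhat_step :: "nat \<Rightarrow> (nat \<Rightarrow> nat) \<Rightarrow> (nat \<Rightarrow> nat) \<Rightarrow> bool" where
  "bruhat_step n u v \<longleftrightarrow> (\<exists>j k. 1 \<le> j \<and> j < k \<and> k \<le> n \<and>
      v = u \<circ> Transposition.transpose j k \<and> perm_len n u < perm_len n v)"

definition bruhat_le :: "nat \<Rightarrow> (nat \<Rightarrow> nat) \<Rightarrow> (nat \<Rightarrow> nat) \<Rightarrow> bool" where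
  "bruhat_le n = (bruhat_step n)\<^sup>*\<^sup>*"

definition bruhat_less :: "nat \<Rightarrow> (nat \<Rightarrow> nat) \<Rightarrow> (nat \<Rightarrow> nat) \<Rightarrow> bool" where
  "bruhat_less n u v \<longleftrightarrow> bruhat_le n u v \<and> u \<noteq> v"

inductive_set parabolic :: "nat \<Rightarrow> nat \<Rightarrow> (nat \<Rightarrow> nat) set" for n i where
  id_in: "id \<in> parabolic n i"
| step: "g \<in> parabolic n i \<Longrightarrow> 1 \<le> j \<Longrightarrow> j < n \<Longrightarrow> j \<noteq> i \<Longrightarrow> g \<circ> sref j \<in> parabolic n i"

text \<open>The word (s_i ... s_1)(s_{i+1} ... s_2)...(s_{n-1} ... s_{n-i}) as the list [a_1,...].\<close>
definition word :: "nat \<Rightarrow> nat \<Rightarrow> nat list" where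
  "word n i = concat (map (\<lambda>b. map (\<lambda>t. i + b - t) [0..<i]) [0..<n - i])"

definition pprod :: "nat \<Rightarrow> nat \<Rightarrow> (nat \<Rightarrow> nat) \<Rightarrow> nat \<Rightarrow> (nat \<Rightarrow> nat)" where
  "pprod n i w j = foldl (\<lambda>u a. u \<circ> sref a) w (take j (word n i))"

text \<open>Roots alpha_{j,k} represented as pairs (j,k); u(alpha_{j,k}) = alpha_{u j, u k};
  -alpha_i = alpha_{i+1,i}.\<close>

end

theory Submission
  imports Defs
begin

definition Inv :: "nat \<Rightarrow> (nat \<Rightarrow> nat) \<Rightarrow> (nat \<times> nat) set" where
  "Inv n u = {(j, k). 1 \<le> j \<and> j < k \<and> k \<le> n \<and> u k < u j}"

lemma perm_len_Inv: "perm_len n u = card (Inv n u)"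
  unfolding perm_len_def Inv_def by simp

lemma finite_Inv: "finite (Inv n u)"
  by (rule finite_subset[of _ "{1..n} \<times> {1..n}"]) (auto simp: Inv_def)

lemma sref_apply: "sref a x = (if x = a then Suc a else if x = Suc a then a else x)"
  by (simp add: sref_def transpose_def)

lemma sref_sref[simp]: "sref a \<circ> sref a = id"
  by (auto simp: fun_eq_iff sref_apply)

lemma Inv_swap_sub:
  assumes "1 \<le> a" "a < n"
  shows "(\<lambda>(j,k). (sref a j, sref a k)) ` (Inv n u - {(a, Suc a)}) \<subseteq> Inv n (u \<circ> sref a) - {(a, Suc a)}"
  using assms by (auto simp: Inv_def sref_apply split: if_splits)

lemma Inv_swap_card:
  assumes "1 \<le> a" "a < n"
  shows "card (Inv n (u \<circ> sref a) - {(a, Suc a)}) = card (Inv n u - {(a, Suc a)})"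
proof -
  let ?f = "(\<lambda>(j,k). (sref a j, sref a k))"
  have inj: "inj ?f"
    by (auto simp: inj_def sref_apply split: if_splits)
  have 1: "card (Inv n u - {(a, Suc a)}) \<le> card (Inv n (u \<circ> sref a) - {(a, Suc a)})"
    using card_mono[OF _ Inv_swap_sub[OF assms, of u]] finite_Inv
      card_image[OF inj_on_subset[OF inj, of "Inv n u - {(a, Suc a)}"]] by auto
  have "card (Inv n (u \<circ> sref a) - {(a, Suc a)}) \<le> card (Inv n (u \<circ> sref a \<circ> sref a) - {(a, Suc a)})"
    using card_mono[OF _ Inv_swap_sub[OF assms, of "u \<circ> sref a"]] finite_Inv
      card_image[OF inj_on_subset[OF inj, of "Inv n (u \<circ> sref a) - {(a, Suc a)}"]] by auto
  also have "u \<circ> sref a \<circ> sref a = u" by (simp add: comp_assoc)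
  finally have 2: "card (Inv n (u \<circ> sref a) - {(a, Suc a)}) \<le> card (Inv n u - {(a, Suc a)})" .
  show ?thesis by (rule antisym[OF 2 1])
qed

lemma perm_len_up:
  assumes "1 \<le> a" "a < n" "u a < u (Suc a)"
  shows "perm_len n (u \<circ> sref a) = Suc (perm_len n u)"
proof -
  have A: "(a, Suc a) \<in> Inv n (u \<circ> sref a)" using assms by (auto simp: Inv_def sref_apply)
  have B: "(a, Suc a) \<notin> Inv n u" using assms by (auto simp: Inv_def)
  have "card (Inv n (u \<circ> sref a)) = Suc (card (Inv n (u \<circ> sref a) - {(a, Suc a)}))"
    using A finite_Inv by (metis card_Suc_Diff1)
  moreover have "card (Inv n u) = card (Inv n u - {(a, Suc a)})" using B by simp
  ultimately show ?thesis using Inv_swap_card[OF assms(1,2), of u] by (simp add: perm_len_Inv)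
qed

lemma perm_len_down:
  assumes "1 \<le> a" "a < n" "u (Suc a) < u a"
  shows "perm_len n u = Suc (perm_len n (u \<circ> sref a))"
proof -
  have "perm_len n (u \<circ> sref a \<circ> sref a) = Suc (perm_len n (u \<circ> sref a))"
    by (rule perm_len_up) (use assms in \<open>auto simp: sref_apply\<close>)
  thus ?thesis by (simp add: comp_assoc)
qed

lemma bruhat_le_len: "bruhat_le n u v \<Longrightarrow> u = v \<or> perm_len n u < perm_len n v"
  unfolding bruhat_le_def
proof (induction rule: rtranclp_induct)
  case base then show ?case by simp
next
  case (step y z) then show ?case unfolding bruhat_step_def by auto
qed

lemma bl_up:
  assumes "1 \<le> a" "a < n" "u a < u (Suc a)"
  shows "bruhat_less n u (u \<circ> sref a)"
proof -
  have "bruhat_step n u (u \<circ> sref a)"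
    unfolding bruhat_step_def using perm_len_up[OF assms] assms
    by (intro exI[of _ a] exI[of _ "Suc a"]) (auto simp: sref_def)
  moreover have "u \<circ> sref a \<noteq> u"
  proof
    assume "u \<circ> sref a = u"
    hence "(u \<circ> sref a) a = u a" by simp
    thus False using assms by (simp add: sref_apply)
  qed
  ultimately show ?thesis unfolding bruhat_less_def bruhat_le_def by auto
qed

lemma bl_down:
  assumes "1 \<le> a" "a < n" "u (Suc a) < u a"
  shows "\<not> bruhat_less n u (u \<circ> sref a)"
  using bruhat_le_len[of n u "u \<circ> sref a"] perm_len_down[OF assms]
  unfolding bruhat_less_def by auto

definition hh :: "nat \<Rightarrow> nat \<Rightarrow> nat" where
  "hh i m = i + m div i - m mod i"

lemma word_concat:
  assumes "0 < i"
  shows "concat (map (\<lambda>b. map (\<lambda>t. i + b - t) [0..<i]) [0..<k]) = map (hh i) [0..<i * k]"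
proof (induction k)
  case 0 then show ?case by simp
next
  case (Suc k)
  have "[0..<i * Suc k] = [0..<i * k] @ map (\<lambda>t. t + i * k) [0..<i]"
  proof -
    have "[0..<i * k + i] = [0..<i * k] @ [i*k..<i * k + i]" by (rule upt_add_eq_append) simp
    thus ?thesis by (simp add: map_add_upt add.commute)
  qed
  moreover have "map (hh i) (map (\<lambda>t. t + i * k) [0..<i]) = map (\<lambda>t. i + k - t) [0..<i]"
    using assms by (auto simp: hh_def)
  ultimately show ?case using Suc by simp
qed

lemma word_eq: "0 < i \<Longrightarrow> word n i = map (hh i) [0..<i * (n - i)]"
  unfolding word_def by (rule word_concat)

primrec PP :: "nat \<Rightarrow> nat \<Rightarrow> nat \<Rightarrow> nat" where
  "PP i 0 = id"
| "PP i (Suc m) = PP i m \<circ> sref (hh i m)"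

lemma foldl_PP: "foldl (\<lambda>u a. u \<circ> sref a) w (map (hh i) [0..<j]) = w \<circ> PP i j"
  by (induction j) (simp_all add: comp_assoc)

lemma pprod_eq:
  assumes "0 < i" "j \<le> i * (n - i)"
  shows "pprod n i w j = w \<circ> PP i j"
  using assms unfolding pprod_def word_eq[OF assms(1)]
  by (simp add: take_map foldl_PP min_def)

lemma word_nth: "0 < i \<Longrightarrow> m < i * (n - i) \<Longrightarrow> word n i ! m = hh i m"
  by (simp add: word_eq)

definition QQ :: "nat \<Rightarrow> nat \<Rightarrow> nat \<Rightarrow> nat" where
  "QQ i b x = (if 1 \<le> x \<and> x \<le> b then i + x else if b < x \<and> x \<le> b + i then x - b else x)"

definition RR :: "nat \<Rightarrow> nat \<Rightarrow> nat \<Rightarrow> nat \<Rightarrow> nat" where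
  "RR i b t x = (if x = i + b + 1 - t then i + b + 1
     else if i + b + 1 - t < x \<and> x \<le> i + b + 1 then x - 1 else x)"

lemma RR_step: "t < i \<Longrightarrow> RR i b (Suc t) = RR i b t \<circ> sref (i + b - t)"
  by (auto simp: fun_eq_iff RR_def sref_apply)

lemma RR_0: "RR i b 0 = id"
  by (auto simp: fun_eq_iff RR_def)

lemma QQ_step: "QQ i (Suc b) = QQ i b \<circ> RR i b i"
  by (auto simp: fun_eq_iff RR_def QQ_def)

lemma PP_formula:
  assumes "0 < i"
  shows "PP i m = QQ i (m div i) \<circ> RR i (m div i) (m mod i)"
proof (induction m)
  case 0 then show ?case by (simp add: RR_0 fun_eq_iff QQ_def)
next
  case (Suc m)
  have h: "hh i m = i + m div i - m mod i" by (simp add: hh_def)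
  have lt: "m mod i < i" using assms by simp
  show ?case
  proof (cases "Suc (m mod i) = i")
    case True
    then have "Suc m mod i = 0" "Suc m div i = Suc (m div i)"
      by (simp_all add: mod_Suc div_Suc)
    moreover have "RR i (m div i) i = RR i (m div i) (m mod i) \<circ> sref (hh i m)"
      using RR_step[of "m mod i" i "m div i"] True h lt by simp
    ultimately show ?thesis using Suc
      by (simp add: RR_0 QQ_step comp_assoc)
  next
    case False
    then have "Suc m mod i = Suc (m mod i)" "Suc m div i = m div i"
      by (simp_all add: mod_Suc div_Suc)
    then show ?thesis using Suc False h lt
      by (simp add: RR_step comp_assoc)
  qed
qed

lemma PP_vals:
  assumes "0 < i"
  shows "PP i m (hh i m) = i - m mod i" "PP i m (Suc (hh i m)) = i + 1 + m div i"
proof -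
  have lt: "m mod i < i" using assms by simp
  have A: "QQ i b (RR i b t (i + b - t)) = i - t" if "t < i" for b t
    using that by (auto simp: QQ_def RR_def)
  have B: "QQ i b (RR i b t (Suc (i + b - t))) = i + 1 + b" if "t < i" for b t
    using that by (auto simp: QQ_def RR_def)
  show "PP i m (hh i m) = i - m mod i"
    using A[OF lt] by (simp add: PP_formula[OF assms] hh_def)
  show "PP i m (Suc (hh i m)) = i + 1 + m div i"
    using B[OF lt] by (simp add: PP_formula[OF assms] hh_def)
qed

lemma perm_range: "w permutes {1..n} \<Longrightarrow> x \<in> {1..n} \<Longrightarrow> w x \<in> {1..n}"
  by (metis permutes_in_image)

lemma perm_inj: "w permutes {1..n} \<Longrightarrow> w x = w y \<Longrightarrow> x = y"
  using permutes_inj by (metis injD)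

lemma perm_surj: "w permutes {1..n} \<Longrightarrow> r \<in> {1..n} \<Longrightarrow> \<exists>x\<in>{1..n}. w x = r"
  by (metis permutes_inverses(1) permutes_inv permutes_in_image)

lemma perm_card_image: "w permutes {1..n} \<Longrightarrow> card (w ` A) = card A"
  by (meson card_image permutes_inj inj_on_subset subset_UNIV)

lemma preserve_low_high:
  assumes w: "w permutes {1..n}" and "i \<le> n" and low: "\<forall>k\<in>{1..i}. w k \<le> i"
  shows "\<forall>l\<in>{Suc i..n}. i < w l"
proof
  fix l assume l: "l \<in> {Suc i..n}"
  have sub: "w ` {1..i} \<subseteq> {1..i}" using low perm_range[OF w] assms(2) by force
  have "w ` {1..i} = {1..i}"
    by (rule card_subset_eq) (use sub perm_card_image[OF w] in auto)
  show "i < w l"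
  proof (rule ccontr)
    assume "\<not> i < w l"
    moreover have "1 \<le> w l" using perm_range[OF w, of l] l by auto
    ultimately have "w l \<in> w ` {1..i}" using \<open>w ` {1..i} = {1..i}\<close> by auto
    then obtain k where "k \<in> {1..i}" "w l = w k" by auto
    then show False using perm_inj[OF w] l by fastforce
  qed
qed

lemma high_low:
  assumes w: "w permutes {1..n}" and "i \<le> n" and high: "\<forall>l\<in>{Suc i..n}. i < w l"
    and k: "k \<in> {1..i}"
  shows "w k \<le> i"
proof (rule ccontr)
  assume "\<not> w k \<le> i"
  have sub: "w ` {Suc i..n} \<subseteq> {Suc i..n}" using high perm_range[OF w] assms(2) by force
  have eq: "w ` {Suc i..n} = {Suc i..n}"
    by (rule card_subset_eq) (use sub perm_card_image[OF w] in auto)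
  have "w k \<in> {Suc i..n}" using \<open>\<not> w k \<le> i\<close> perm_range[OF w, of k] k assms(2) by auto
  then have "w k \<in> w ` {Suc i..n}" using eq by simp
  then obtain l where "l \<in> {Suc i..n}" "w k = w l" by auto
  then show False using perm_inj[OF w] k by fastforce
qed

lemma no_descent_mono:
  "(\<forall>m. x \<le> m \<and> m < y \<longrightarrow> g m \<le> g (Suc m)) \<Longrightarrow> x \<le> y \<Longrightarrow> (g x :: nat) \<le> g y"
proof (induction y)
  case 0 then show ?case by simp
next
  case (Suc y)
  show ?case
  proof (cases "x = Suc y")
    case True then show ?thesis by simp
  next
    case False
    then have "g x \<le> g y" using Suc by auto
    also have "g y \<le> g (Suc y)" using Suc False by auto
    finally show ?thesis .
  qed
qed

lemma descent_exists:
  assumes w: "w permutes {1..n}" and ne: "w \<noteq> id"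
  shows "\<exists>a. 1 \<le> a \<and> a < n \<and> w (Suc a) < w a"
proof -
  have "\<exists>x. x \<in> {1..n} \<and> w x \<noteq> x"
    using ne w by (metis eq_id_iff permutes_not_in)
  define x where "x = (LEAST x. x \<in> {1..n} \<and> w x \<noteq> x)"
  have x: "x \<in> {1..n}" "w x \<noteq> x"
    using LeastI_ex[OF \<open>\<exists>x. x \<in> {1..n} \<and> w x \<noteq> x\<close>] unfolding x_def by auto
  have fix_below: "w y = y" if "y < x" for y
  proof (cases "y \<in> {1..n}")
    case True
    then show ?thesis using not_less_Least[of y "\<lambda>x. x \<in> {1..n} \<and> w x \<noteq> x"] that
      unfolding x_def by auto
  next
    case False then show ?thesis using permutes_not_in[OF w] by auto
  qed
  have gt: "x < w x"
  proof (rule ccontr)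
    assume "\<not> x < w x"
    then have "w x < x" using x by auto
    then have "w (w x) = w x" using fix_below by auto
    then show False using perm_inj[OF w] x by metis
  qed
  obtain y where y: "y \<in> {1..n}" "w y = x" using perm_surj[OF w x(1)] by auto
  have "x < y"
  proof (rule ccontr)
    assume "\<not> x < y"
    moreover have "y \<noteq> x" using y x by auto
    ultimately have "y < x" by auto
    then show False using fix_below y x by auto
  qed
  have "\<exists>m. x \<le> m \<and> m < y \<and> w (Suc m) < w m"
    using no_descent_mono[of x y w] \<open>x < y\<close> gt y by fastforce
  then obtain m where "x \<le> m" "m < y" "w (Suc m) < w m" by blast
  then show ?thesis using x(1) y(1) by (intro exI[of _ m]) auto
qed

lemma sref_permutes: "1 \<le> j \<Longrightarrow> j < n \<Longrightarrow> sref j permutes {1..n}"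
  unfolding sref_def by (rule permutes_swap_id) auto

definition Par :: "nat \<Rightarrow> nat \<Rightarrow> (nat \<Rightarrow> nat) set" where
  "Par n i = {g. g permutes {1..n} \<and> (\<forall>k\<in>{1..i}. g k \<le> i)}"

lemma sref_low: "j \<noteq> i \<Longrightarrow> 1 \<le> j \<Longrightarrow> k \<in> {1..i} \<Longrightarrow> sref j k \<in> {1..i}"
  by (auto simp: sref_apply)

lemma parabolic_sub: "g \<in> parabolic n i \<Longrightarrow> g \<in> Par n i"
proof (induction rule: parabolic.induct)
  case id_in
  have "(\<lambda>a. a) permutes {1..n}" using permutes_id[of "{1..n}"] unfolding id_def .
  moreover have "\<forall>k\<in>{1..i}. (\<lambda>a. a) k \<le> i" by auto
  ultimately show ?case unfolding Par_def id_def mem_Collect_eq by (rule conjI)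
next
  case (step g j)
  then have g: "g permutes {1..n}" and low: "\<forall>k\<in>{1..i}. g k \<le> i" by (auto simp: Par_def)
  have "g \<circ> sref j permutes {1..n}" by (rule permutes_compose[OF sref_permutes g]) (use step in auto)
  moreover have "\<forall>k\<in>{1..i}. (g \<circ> sref j) k \<le> i"
  proof
    fix k assume "k \<in> {1..i}"
    then have "sref j k \<in> {1..i}" using sref_low step by blast
    then show "(g \<circ> sref j) k \<le> i" using low by simp
  qed
  ultimately show ?case unfolding Par_def by blast
qed

lemma Par_sub:
  assumes "i < n"
  shows "g \<in> Par n i \<Longrightarrow> g \<in> parabolic n i"
proof (induction "perm_len n g" arbitrary: g rule: less_induct)
  case less
  then have g: "g permutes {1..n}" and low: "\<forall>k\<in>{1..i}. g k \<le> i" by (auto simp: Par_def)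
  show ?case
  proof (cases "g = id")
    case True then show ?thesis by (simp add: parabolic.id_in)
  next
    case False
    obtain a where a: "1 \<le> a" "a < n" "g (Suc a) < g a" using descent_exists[OF g False] by auto
    have high: "\<forall>l\<in>{Suc i..n}. i < g l" using preserve_low_high[OF g _ low] assms by auto
    have "a \<noteq> i"
    proof
      assume "a = i"
      then have "g a \<le> i" using low a by auto
      moreover have "i < g (Suc a)" using high \<open>a = i\<close> a by auto
      ultimately show False using a by auto
    qed
    have "g \<circ> sref a permutes {1..n}" by (rule permutes_compose[OF sref_permutes[OF a(1,2)] g])
    moreover have "\<forall>k\<in>{1..i}. (g \<circ> sref a) k \<le> i"
    proof
      fix k assume "k \<in> {1..i}"
      then have "sref a k \<in> {1..i}" using sref_low \<open>a \<noteq> i\<close> a(1) by blast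
      then show "(g \<circ> sref a) k \<le> i" using low by simp
    qed
    ultimately have "g \<circ> sref a \<in> Par n i" unfolding Par_def by blast
    moreover have "perm_len n (g \<circ> sref a) < perm_len n g" using perm_len_down[OF a] by simp
    ultimately have "g \<circ> sref a \<in> parabolic n i" using less by blast
    then have "g \<circ> sref a \<circ> sref a \<in> parabolic n i"
      using parabolic.step \<open>a \<noteq> i\<close> a by blast
    then show ?thesis by (simp add: comp_assoc)
  qed
qed

lemma parabolic_eq: "i < n \<Longrightarrow> parabolic n i = Par n i"
  using parabolic_sub Par_sub by blast

definition BB :: "nat \<Rightarrow> nat \<Rightarrow> (nat \<Rightarrow> nat) \<Rightarrow> (nat \<times> nat) set" where
  "BB n i w = {(k, l). k \<in> {1..i} \<and> l \<in> {Suc i..n} \<and> w l < w k}"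

lemma finite_BB: "finite (BB n i w)"
  by (rule finite_subset[of _ "{1..i} \<times> {Suc i..n}"]) (auto simp: BB_def)

lemma BB_empty:
  assumes w: "w permutes {1..n}" and "i < n"
  shows "BB n i w = {} \<longleftrightarrow> (\<forall>k\<in>{1..i}. w k \<le> i)"
proof
  assume e: "BB n i w = {}"
  have high: "\<forall>l\<in>{Suc i..n}. i < w l"
  proof (rule ccontr)
    assume "\<not> (\<forall>l\<in>{Suc i..n}. i < w l)"
    then obtain l where l: "l \<in> {Suc i..n}" "w l \<le> i" by auto
    have "w l \<in> {1..n}" using perm_range[OF w] l by auto
    have "\<exists>k\<in>{1..i}. i < w k"
    proof (rule ccontr)
      assume "\<not> (\<exists>k\<in>{1..i}. i < w k)"
      then have low: "\<forall>k\<in>{1..i}. w k \<le> i" by auto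
      have "i < w l" using preserve_low_high[OF w less_imp_le[OF assms(2)] low] l(1) by blast
      then show False using l(2) by simp
    qed
    then obtain k where "k \<in> {1..i}" "i < w k" by auto
    then have "(k, l) \<in> BB n i w" using l by (auto simp: BB_def)
    then show False using e by auto
  qed
  show "\<forall>k\<in>{1..i}. w k \<le> i" using high_low[OF w less_imp_le[OF assms(2)] high] by auto
next
  assume low: "\<forall>k\<in>{1..i}. w k \<le> i"
  have high: "\<forall>l\<in>{Suc i..n}. i < w l" using preserve_low_high[OF w less_imp_le[OF assms(2)] low] by auto
  have nl: "\<not> w l < w k" if "k \<in> {1..i}" "l \<in> {Suc i..n}" for k l
  proof -
    have "w k \<le> i" using low that(1) by blast
    moreover have "i < w l" using high that(2) by blast
    ultimately show ?thesis by simp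
  qed
  show "BB n i w = {}" unfolding BB_def using nl by blast
qed

lemma card_low_gap: "1 \<le> q \<Longrightarrow> card ({1..q - 1} \<union> {Suc q}) = q"
  by simp

lemma C_BB:
  assumes w: "w permutes {1..n}" and i: "1 \<le> i" "i < n"
    and C: "\<forall>k\<in>{1..i}. w k < i \<or> w k = Suc i"
  shows "\<exists>k0 l0. BB n i w = {(k0, l0)} \<and> w k0 = Suc i \<and> w l0 = i"
proof -
  let ?A = "{1..i - 1} \<union> {Suc i}"
  have sub: "w ` {1..i} \<subseteq> ?A"
  proof
    fix v assume "v \<in> w ` {1..i}"
    then obtain k where k: "k \<in> {1..i}" "v = w k" by auto
    have "1 \<le> w k" using perm_range[OF w, of k] k i by auto
    then show "v \<in> ?A" using C[rule_format, OF k(1)] k by auto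
  qed
  have SA: "w ` {1..i} = ?A"
    by (rule card_subset_eq) (use sub perm_card_image[OF w] i in auto)
  have "Suc i \<in> w ` {1..i}" using SA by auto
  then obtain k0 where k0: "k0 \<in> {1..i}" "w k0 = Suc i" by auto
  have "i \<in> {1..n}" using i by auto
  then obtain l0 where l0: "l0 \<in> {1..n}" "w l0 = i" using perm_surj[OF w] by blast
  have "i \<notin> w ` {1..i}" using SA by auto
  then have l0': "l0 \<in> {Suc i..n}" using l0 by (auto simp: image_iff)
  have "BB n i w = {(k0, l0)}"
  proof
    show "{(k0, l0)} \<subseteq> BB n i w" using k0 l0 l0' by (auto simp: BB_def)
    show "BB n i w \<subseteq> {(k0, l0)}"
    proof
      fix p assume "p \<in> BB n i w"
      then obtain k l where p: "p = (k, l)" "k \<in> {1..i}" "l \<in> {Suc i..n}" "w l < w k"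
        by (auto simp: BB_def)
      have wl1: "1 \<le> w l" using perm_range[OF w, of l] p by auto
      have nS: "w l \<notin> w ` {1..i}"
      proof
        assume "w l \<in> w ` {1..i}"
        then obtain k' where "k' \<in> {1..i}" "w l = w k'" by auto
        then show False using perm_inj[OF w] p by fastforce
      qed
      have "w k = Suc i"
      proof (rule ccontr)
        assume "w k \<noteq> Suc i"
        then have "w k < i" using C p by auto
        then have "w l \<in> ?A" using wl1 p by auto
        then show False using nS SA by auto
      qed
      then have "w l \<le> i" using p by auto
      then have "w l = i" using nS SA wl1 by auto
      then have "k = k0" "l = l0" using perm_inj[OF w] \<open>w k = Suc i\<close> k0 l0 by auto
      then show "p \<in> {(k0, l0)}" using p by auto
    qed
  qed
  then show ?thesis using k0 l0 by blast
qed

lemma BB_one_C: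
  assumes w: "w permutes {1..n}" and i: "1 \<le> i" "i < n"
    and one: "card (BB n i w) = 1"
  shows "\<forall>k\<in>{1..i}. w k < i \<or> w k = Suc i"
proof -
  obtain x where x: "BB n i w = {x}" using one card_1_singletonE by blast
  obtain k0 l0 where x': "x = (k0, l0)" by (cases x)
  have k0: "k0 \<in> {1..i}" and l0: "l0 \<in> {Suc i..n}" and pq: "w l0 < w k0"
    using x x' unfolding BB_def by blast+
  have uniq: "\<And>k l. k \<in> {1..i} \<Longrightarrow> l \<in> {Suc i..n} \<Longrightarrow> w l < w k \<Longrightarrow> k = k0 \<and> l = l0"
  proof -
    fix k l assume "k \<in> {1..i}" "l \<in> {Suc i..n}" "w l < w k"
    then have "(k, l) \<in> BB n i w" by (auto simp: BB_def)
    then show "k = k0 \<and> l = l0" using x x' by auto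
  qed
  define q where "q = w l0"
  have q1: "1 \<le> q" "q \<le> n" using perm_range[OF w, of l0] l0 q_def by auto
  have i_below: "w k < q" if "k \<in> {1..i}" "k \<noteq> k0" for k
  proof (rule ccontr)
    assume "\<not> w k < q"
    moreover have "w k \<noteq> q" using perm_inj[OF w, of k l0] that l0 q_def by auto
    ultimately have "w l0 < w k" using q_def by auto
    then show False using uniq[OF that(1) l0] that by auto
  qed
  have below_in: "r \<in> w ` {1..i}" if "1 \<le> r" "r < q" for r
  proof -
    have "r \<in> {1..n}" using that q1 by auto
    then obtain x where x: "x \<in> {1..n}" "w x = r" using perm_surj[OF w] by blast
    show ?thesis
    proof (cases "x \<le> i")
      case True then show ?thesis using x by auto
    next
      case False
      then have "x \<in> {Suc i..n}" using x by auto
      moreover have "w x < w k0" using x that pq q_def by auto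
      ultimately have "x = l0" using uniq[OF k0] by blast
      then show ?thesis using x that q_def by auto
    qed
  qed
  have pSuc: "w k0 = Suc q"
  proof (rule ccontr)
    assume "w k0 \<noteq> Suc q"
    then have lt: "Suc q < w k0" using pq q_def by auto
    then have "Suc q \<in> {1..n}" using perm_range[OF w, of k0] k0 i by auto
    then obtain x where x: "x \<in> {1..n}" "w x = Suc q" using perm_surj[OF w] by blast
    show False
    proof (cases "x \<le> i")
      case True
      then have "x \<in> {1..i}" using x by auto
      moreover have "x \<noteq> k0" using x lt by auto
      ultimately have "w x < q" using i_below by blast
      then show False using x by auto
    next
      case False
      then have "x \<in> {Suc i..n}" using x by auto
      moreover have "w x < w k0" using x lt by auto
      ultimately have "x = l0" using uniq[OF k0] by blast
      then show False using x q_def by auto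
    qed
  qed
  have S1: "w ` {1..i} \<subseteq> {1..q - 1} \<union> {Suc q}"
  proof
    fix v assume "v \<in> w ` {1..i}"
    then obtain k where k: "k \<in> {1..i}" "v = w k" by auto
    have "1 \<le> w k" using perm_range[OF w, of k] k i by auto
    then show "v \<in> {1..q - 1} \<union> {Suc q}"
      using k i_below[OF k(1)] pSuc by (cases "k = k0") auto
  qed
  have "Suc q \<in> w ` {1..i}" using pSuc k0 by (metis image_eqI)
  then have S2: "{1..q - 1} \<union> {Suc q} \<subseteq> w ` {1..i}"
    using below_in by auto
  have ci: "card (w ` {1..i}) = i" using perm_card_image[OF w] by simp
  have "i \<le> q" using card_mono[OF _ S1] ci card_low_gap[OF q1(1)] by simp
  moreover have "q \<le> i" using card_mono[OF _ S2] ci card_low_gap[OF q1(1)] by simp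
  ultimately have qi: "q = i" by simp
  show ?thesis
  proof
    fix k assume k: "k \<in> {1..i}"
    show "w k < i \<or> w k = Suc i"
      using i_below[OF k] pSuc qi by (cases "k = k0") auto
  qed
qed

lemma step_facts:
  assumes w: "w permutes {1..n}" and i: "1 \<le> i" "i < n"
    and j: "j \<in> {1..i * (n - i)}"
  shows "bruhat_less n (pprod n i w (j - 1)) (pprod n i w j) \<longleftrightarrow>
           w (i - (j - 1) mod i) < w (i + 1 + (j - 1) div i)"
    and "bruhat_less n (pprod n i w j) (pprod n i w (j - 1)) \<longleftrightarrow>
           w (i + 1 + (j - 1) div i) < w (i - (j - 1) mod i)"
    and "(pprod n i w (j - 1) (word n i ! (j - 1)), pprod n i w (j - 1) (Suc (word n i ! (j - 1))))
           = (w (i - (j - 1) mod i), w (i + 1 + (j - 1) div i))"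
proof -
  define m where "m = j - 1"
  have i0: "0 < i" using i by simp
  have mN: "m < i * (n - i)" using j m_def by auto
  have jm: "j = Suc m" using j m_def by auto
  have dv: "m div i < n - i" using mN less_mult_imp_div_less[of m "n - i" i] by (simp add: mult.commute)
  have md: "m mod i < i" using i0 by simp
  define a where "a = hh i m"
  have a1: "1 \<le> a" unfolding a_def hh_def using md by linarith
  have a2: "a < n" unfolding a_def hh_def using dv i by linarith
  note a = a1 a2
  define u where "u = w \<circ> PP i m"
  have pm: "pprod n i w m = u" unfolding u_def by (rule pprod_eq[OF i0]) (use mN in simp)
  have pj: "pprod n i w j = u \<circ> sref a"
    unfolding u_def a_def jm by (subst pprod_eq[OF i0]) (use mN jm in \<open>simp_all add: comp_assoc\<close>)
  have ua: "u a = w (i - m mod i)" "u (Suc a) = w (i + 1 + m div i)"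
    unfolding u_def a_def using PP_vals[OF i0] by simp_all
  have wn: "word n i ! m = a" unfolding a_def by (rule word_nth[OF i0 mN])
  have ne: "w (i - m mod i) \<noteq> w (i + 1 + m div i)"
  proof
    assume "w (i - m mod i) = w (i + 1 + m div i)"
    then have "i - m mod i = i + 1 + m div i" by (rule perm_inj[OF w])
    then show False by simp
  qed
  have bk: "u \<circ> sref a \<circ> sref a = u" by (simp add: comp_assoc)
  have A: "bruhat_less n u (u \<circ> sref a) \<longleftrightarrow> u a < u (Suc a)"
  proof
    assume "bruhat_less n u (u \<circ> sref a)"
    then show "u a < u (Suc a)" using bl_down[OF a, of u] ne ua by (cases "u a < u (Suc a)") auto
  qed (rule bl_up[OF a])
  have B: "bruhat_less n (u \<circ> sref a) u \<longleftrightarrow> u (Suc a) < u a"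
  proof -
    have "bruhat_less n (u \<circ> sref a) (u \<circ> sref a \<circ> sref a) \<longleftrightarrow>
        (u \<circ> sref a) a < (u \<circ> sref a) (Suc a)"
    proof
      assume "bruhat_less n (u \<circ> sref a) (u \<circ> sref a \<circ> sref a)"
      then show "(u \<circ> sref a) a < (u \<circ> sref a) (Suc a)"
        using bl_down[OF a, of "u \<circ> sref a"] ne ua
        by (cases "(u \<circ> sref a) a < (u \<circ> sref a) (Suc a)") (auto simp: sref_apply)
    qed (rule bl_up[OF a])
    then show ?thesis using bk by (simp add: sref_apply)
  qed
  show "bruhat_less n (pprod n i w (j - 1)) (pprod n i w j) \<longleftrightarrow>
           w (i - (j - 1) mod i) < w (i + 1 + (j - 1) div i)"
    using A pm pj ua m_def by simp
  show "bruhat_less n (pprod n i w j) (pprod n i w (j - 1)) \<longleftrightarrow>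
           w (i + 1 + (j - 1) div i) < w (i - (j - 1) mod i)"
    using B pm pj ua m_def by simp
  show "(pprod n i w (j - 1) (word n i ! (j - 1)), pprod n i w (j - 1) (Suc (word n i ! (j - 1))))
           = (w (i - (j - 1) mod i), w (i + 1 + (j - 1) div i))"
    using pm ua wn m_def by simp
qed

definition phi :: "nat \<Rightarrow> nat \<Rightarrow> nat \<times> nat" where
  "phi i j = (i - (j - 1) mod i, i + 1 + (j - 1) div i)"

lemma phi_inj: "0 < i \<Longrightarrow> inj_on (phi i) {1..N}"
proof (rule inj_onI)
  fix x y assume i: "0 < i" and x: "x \<in> {1..N}" and y: "y \<in> {1..N}" and e: "phi i x = phi i y"
  have "(x - 1) mod i = (y - 1) mod i" using e i unfolding phi_def
    by (metis Pair_inject diff_diff_cancel mod_less_divisor less_imp_le)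
  moreover have "(x - 1) div i = (y - 1) div i" using e unfolding phi_def by simp
  ultimately have "x - 1 = y - 1" by (metis div_mod_decomp)
  then show "x = y" using x y by auto
qed

lemma phi_image:
  assumes i: "1 \<le> i" "i < n"
  shows "phi i ` {1..i * (n - i)} = {1..i} \<times> {Suc i..n}"
proof
  show "phi i ` {1..i * (n - i)} \<subseteq> {1..i} \<times> {Suc i..n}"
  proof
    fix p assume "p \<in> phi i ` {1..i * (n - i)}"
    then obtain j where j: "j \<in> {1..i * (n - i)}" "p = phi i j" by auto
    have "j - 1 < i * (n - i)" using j by auto
    then have dv: "(j - 1) div i < n - i"
      using less_mult_imp_div_less[of "j - 1" "n - i" i] by (simp add: mult.commute)
    have "(j - 1) mod i < i" using i by simp
    then show "p \<in> {1..i} \<times> {Suc i..n}" using j dv unfolding phi_def by auto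
  qed
next
  show "{1..i} \<times> {Suc i..n} \<subseteq> phi i ` {1..i * (n - i)}"
  proof
    fix p assume "p \<in> {1..i} \<times> {Suc i..n}"
    then obtain k l where p: "p = (k, l)" "k \<in> {1..i}" "l \<in> {Suc i..n}" by auto
    define b where "b = l - Suc i"
    define t where "t = i - k"
    have t: "t < i" using p t_def by auto
    define j where "j = b * i + t + 1"
    have jm: "j - 1 = t + b * i" using j_def by simp
    have dm: "(j - 1) div i = b" "(j - 1) mod i = t" using jm t by simp_all
    have "b < n - i" using p b_def by auto
    then have "Suc b \<le> n - i" by simp
    then have "Suc b * i \<le> (n - i) * i" by (rule mult_right_mono) simp
    then have "j \<le> i * (n - i)" using t unfolding j_def by (simp add: mult.commute)
    moreover have "phi i j = p" using dm p unfolding phi_def b_def t_def by auto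
    ultimately show "p \<in> phi i ` {1..i * (n - i)}" unfolding j_def by force
  qed
qed

theorem lemma5p2:
  fixes n i :: nat and w :: "nat \<Rightarrow> nat"
  assumes "3 \<le> n" and "1 \<le> i" and "i \<le> n - 1" and "w permutes {1..n}"
  shows "((\<forall>j\<in>{1..i * (n - i)}. bruhat_less n (pprod n i w (j - 1)) (pprod n i w j))
           \<longleftrightarrow> w \<in> parabolic n i) \<and>
         (card {j\<in>{1..i * (n - i)}. \<not> bruhat_less n (pprod n i w (j - 1)) (pprod n i w j)} = 1
           \<longleftrightarrow> w \<in> (\<lambda>g. sref i \<circ> g) ` parabolic n i) \<and>
         (w \<in> (\<lambda>g. sref i \<circ> g) ` parabolic n i \<longrightarrow>
           (\<exists>!j. j \<in> {1..i * (n - i)} \<and> bruhat_less n (pprod n i w j) (pprod n i w (j - 1))) \<and>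
           (\<forall>j\<in>{1..i * (n - i)}. bruhat_less n (pprod n i w j) (pprod n i w (j - 1)) \<longrightarrow>
              (pprod n i w (j - 1) (word n i ! (j - 1)), pprod n i w (j - 1) (Suc (word n i ! (j - 1))))
                = (Suc i, i)))"
proof -
  have w: "w permutes {1..n}" by (rule assms(4))
  have i: "1 \<le> i" "i < n" using assms by auto
  have i0: "0 < i" using i by simp
  define J where "J = {1..i * (n - i)}"
  define K where "K j = i - (j - 1) mod i" for j
  define L where "L j = i + 1 + (j - 1) div i" for j
  have phiKL: "phi i j = (K j, L j)" for j unfolding phi_def K_def L_def by simp
  have ne: "w (K j) \<noteq> w (L j)" for j
  proof
    assume "w (K j) = w (L j)"
    then have "K j = L j" by (rule perm_inj[OF w])
    then show False unfolding K_def L_def by simp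
  qed
  have up: "bruhat_less n (pprod n i w (j - 1)) (pprod n i w j) \<longleftrightarrow> w (K j) < w (L j)"
    if "j \<in> J" for j using step_facts(1)[OF w i] that unfolding J_def K_def L_def by blast
  have dn: "bruhat_less n (pprod n i w j) (pprod n i w (j - 1)) \<longleftrightarrow> w (L j) < w (K j)"
    if "j \<in> J" for j using step_facts(2)[OF w i] that unfolding J_def K_def L_def by blast
  have rt: "(pprod n i w (j - 1) (word n i ! (j - 1)), pprod n i w (j - 1) (Suc (word n i ! (j - 1))))
      = (w (K j), w (L j))" if "j \<in> J" for j
    using step_facts(3)[OF w i] that unfolding J_def K_def L_def by blast
  define Jb where "Jb = {j\<in>J. w (L j) < w (K j)}"
  have Jb1: "{j\<in>{1..i * (n - i)}. \<not> bruhat_less n (pprod n i w (j - 1)) (pprod n i w j)} = Jb"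
  proof -
    have "\<not> w (K j) < w (L j) \<longleftrightarrow> w (L j) < w (K j)" for j using ne[of j] by auto
    then show ?thesis using up unfolding Jb_def J_def by auto
  qed
  have Jb2: "{j. j \<in> {1..i * (n - i)} \<and> bruhat_less n (pprod n i w j) (pprod n i w (j - 1))} = Jb"
    using dn unfolding Jb_def J_def by auto
  have img: "phi i ` Jb = BB n i w"
  proof -
    have "phi i ` Jb = {p \<in> phi i ` J. w (snd p) < w (fst p)}"
      unfolding Jb_def using phiKL by force
    also have "\<dots> = {p \<in> {1..i} \<times> {Suc i..n}. w (snd p) < w (fst p)}"
      using phi_image[OF i] unfolding J_def by simp
    also have "\<dots> = BB n i w" unfolding BB_def by auto
    finally show ?thesis .
  qed
  have cJb: "card Jb = card (BB n i w)"
  proof -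
    have "inj_on (phi i) Jb"
      by (rule inj_on_subset[OF phi_inj[OF i0]]) (auto simp: Jb_def J_def)
    then show ?thesis using img card_image by metis
  qed
  have Jb_empty: "Jb = {} \<longleftrightarrow> BB n i w = {}" using img by auto
  have par: "parabolic n i = Par n i" by (rule parabolic_eq[OF i(2)])
  have imgC: "w \<in> (\<lambda>g. sref i \<circ> g) ` parabolic n i \<longleftrightarrow> (\<forall>k\<in>{1..i}. w k < i \<or> w k = Suc i)"
  proof -
    have "w \<in> (\<lambda>g. sref i \<circ> g) ` parabolic n i \<longleftrightarrow> sref i \<circ> w \<in> Par n i"
    proof
      assume "w \<in> (\<lambda>g. sref i \<circ> g) ` parabolic n i"
      then obtain g where "g \<in> Par n i" "w = sref i \<circ> g" using par by auto
      then show "sref i \<circ> w \<in> Par n i" by (simp add: comp_assoc[symmetric])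
    next
      assume "sref i \<circ> w \<in> Par n i"
      moreover have "w = sref i \<circ> (sref i \<circ> w)" by (simp add: comp_assoc[symmetric])
      ultimately show "w \<in> (\<lambda>g. sref i \<circ> g) ` parabolic n i" using par by blast
    qed
    also have "\<dots> \<longleftrightarrow> (\<forall>k\<in>{1..i}. w k < i \<or> w k = Suc i)"
    proof -
      have pm: "sref i \<circ> w permutes {1..n}" by (rule permutes_compose[OF w sref_permutes[OF i]])
      have "sref i (w k) \<le> i \<longleftrightarrow> w k < i \<or> w k = Suc i" if "k \<in> {1..i}" for k
      proof -
        have "1 \<le> w k" using perm_range[OF w, of k] that i by auto
        then show ?thesis by (auto simp: sref_apply)
      qed
      then show ?thesis unfolding Par_def using pm by auto
    qed
    finally show ?thesis .
  qed
  have A: "(\<forall>j\<in>{1..i * (n - i)}. bruhat_less n (pprod n i w (j - 1)) (pprod n i w j))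
           \<longleftrightarrow> w \<in> parabolic n i"
  proof -
    have "(\<forall>j\<in>{1..i * (n - i)}. bruhat_less n (pprod n i w (j - 1)) (pprod n i w j))
        \<longleftrightarrow> {j\<in>{1..i * (n - i)}. \<not> bruhat_less n (pprod n i w (j - 1)) (pprod n i w j)} = {}"
      by auto
    also have "\<dots> \<longleftrightarrow> BB n i w = {}" using Jb1 Jb_empty by simp
    also have "\<dots> \<longleftrightarrow> (\<forall>k\<in>{1..i}. w k \<le> i)" by (rule BB_empty[OF w i(2)])
    also have "\<dots> \<longleftrightarrow> w \<in> parabolic n i" using par w unfolding Par_def by auto
    finally show ?thesis .
  qed
  have B: "card {j\<in>{1..i * (n - i)}. \<not> bruhat_less n (pprod n i w (j - 1)) (pprod n i w j)} = 1
           \<longleftrightarrow> w \<in> (\<lambda>g. sref i \<circ> g) ` parabolic n i"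
  proof
    assume "card {j\<in>{1..i * (n - i)}. \<not> bruhat_less n (pprod n i w (j - 1)) (pprod n i w j)} = 1"
    then have "card (BB n i w) = 1" using Jb1 cJb by simp
    then show "w \<in> (\<lambda>g. sref i \<circ> g) ` parabolic n i" using BB_one_C[OF w i] imgC by blast
  next
    assume "w \<in> (\<lambda>g. sref i \<circ> g) ` parabolic n i"
    then obtain k0 l0 where "BB n i w = {(k0, l0)}" using C_BB[OF w i] imgC by blast
    then show "card {j\<in>{1..i * (n - i)}. \<not> bruhat_less n (pprod n i w (j - 1)) (pprod n i w j)} = 1"
      using Jb1 cJb by simp
  qed
  have C: "w \<in> (\<lambda>g. sref i \<circ> g) ` parabolic n i \<longrightarrow>
           (\<exists>!j. j \<in> {1..i * (n - i)} \<and> bruhat_less n (pprod n i w j) (pprod n i w (j - 1))) \<and>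
           (\<forall>j\<in>{1..i * (n - i)}. bruhat_less n (pprod n i w j) (pprod n i w (j - 1)) \<longrightarrow>
              (pprod n i w (j - 1) (word n i ! (j - 1)), pprod n i w (j - 1) (Suc (word n i ! (j - 1))))
                = (Suc i, i))"
  proof
    assume "w \<in> (\<lambda>g. sref i \<circ> g) ` parabolic n i"
    then obtain k0 l0 where BB: "BB n i w = {(k0, l0)}" "w k0 = Suc i" "w l0 = i"
      using C_BB[OF w i] imgC by blast
    have "card Jb = 1" using cJb BB by simp
    then obtain j0 where j0: "Jb = {j0}" using card_1_singletonE by blast
    have E: "\<exists>!j. j \<in> {1..i * (n - i)} \<and> bruhat_less n (pprod n i w j) (pprod n i w (j - 1))"
    proof (rule ex1I[of _ j0])
      show "j0 \<in> {1..i * (n - i)} \<and> bruhat_less n (pprod n i w j0) (pprod n i w (j0 - 1))"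
        using Jb2 j0 by blast
    next
      fix j assume "j \<in> {1..i * (n - i)} \<and> bruhat_less n (pprod n i w j) (pprod n i w (j - 1))"
      then have "j \<in> Jb" using Jb2 by blast
      then show "j = j0" using j0 by auto
    qed
    have R: "\<forall>j\<in>{1..i * (n - i)}. bruhat_less n (pprod n i w j) (pprod n i w (j - 1)) \<longrightarrow>
              (pprod n i w (j - 1) (word n i ! (j - 1)), pprod n i w (j - 1) (Suc (word n i ! (j - 1))))
                = (Suc i, i)"
    proof (intro ballI impI)
      fix j assume j: "j \<in> {1..i * (n - i)}" and b: "bruhat_less n (pprod n i w j) (pprod n i w (j - 1))"
      then have "j \<in> Jb" using Jb2 by blast
      then have "phi i j \<in> BB n i w" using img by blast
      then have "(K j, L j) = (k0, l0)" using BB phiKL by simp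
      then show "(pprod n i w (j - 1) (word n i ! (j - 1)), pprod n i w (j - 1) (Suc (word n i ! (j - 1))))
                = (Suc i, i)" using rt[of j] j BB unfolding J_def by simp
    qed
    show "(\<exists>!j. j \<in> {1..i * (n - i)} \<and> bruhat_less n (pprod n i w j) (pprod n i w (j - 1))) \<and>
           (\<forall>j\<in>{1..i * (n - i)}. bruhat_less n (pprod n i w j) (pprod n i w (j - 1)) \<longrightarrow>
              (pprod n i w (j - 1) (word n i ! (j - 1)), pprod n i w (j - 1) (Suc (word n i ! (j - 1))))
                = (Suc i, i))" using E R by blast
  qed
  show ?thesis using A B C by blast
qed

end
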